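(* Let $K$ be a totally real number field. If $\alpha\in\mathcal{O}_K^+$ lies on the sail $\mathcal{S}_K$ (i.e. $\iota_M(\alpha)\in\mathcal{S}_K$), then $\alpha$ is indecomposable.
   Context: Let $n=[K:\mathbb{Q}]$, $\tau_1,\dots,\tau_n$ the real embeddings, $\iota_M:K\to\mathbb{R}^n$, $\alpha\mapsto(\tau_1(\alpha),\dots,\tau_n(\alpha))$ the Minkowski embedding and $\Lambda=\iota_M(\mathcal{O}_K)$. $\mathcal{O}_K^+$ is the set of totally positive elements of $\mathcal{O}_K$, so $\iota_M(\mathcal{O}_K^+)=\Lambda\cap\mathbb{R}_{>0}^n$. The Klein polyhedron is the convex hull $\mathcal{K}_K=\operatorname{Conv}(\Lambda\cap\mathbb{R}_{>0}^n)$ and the sail $\mathcal{S}_K$ is its boundary. An element $\alpha\in\mathcal{O}_K^+$ is indecomposable if it cannot be written as $\beta+\gamma$ with $\beta,\gamma\in\mathcal{O}_K^+$. *)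

theory Defs
  imports "HOL-Analysis.Analysis" "HOL-Computational_Algebra.Polynomial"
begin

text \<open>A number field is modelled as a subfield K of the complex numbers that is
finite-dimensional as a vector space over the rationals.\<close>

definition subfield_of_complex :: "complex set \<Rightarrow> bool" where
  "subfield_of_complex K \<longleftrightarrow> 0 \<in> K \<and> 1 \<in> K \<and>
     (\<forall>x\<in>K. \<forall>y\<in>K. x + y \<in> K \<and> x * y \<in> K) \<and>
     (\<forall>x\<in>K. - x \<in> K \<and> inverse x \<in> K)"

definition number_field :: "complex set \<Rightarrow> bool" where
  "number_field K \<longleftrightarrow> subfield_of_complex K \<and>
     (\<exists>B. finite B \<and> B \<subseteq> K \<and>
        (\<forall>x\<in>K. \<exists>c :: complex \<Rightarrow> rat. x = (\<Sum>b\<in>B. of_rat (c b) * b)))"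

text \<open>Field embeddings of K into the complex numbers (only their values on K matter).\<close>

definition field_embedding :: "complex set \<Rightarrow> (complex \<Rightarrow> complex) \<Rightarrow> bool" where
  "field_embedding K \<sigma> \<longleftrightarrow> \<sigma> 1 = 1 \<and>
     (\<forall>x\<in>K. \<forall>y\<in>K. \<sigma> (x + y) = \<sigma> x + \<sigma> y \<and> \<sigma> (x * y) = \<sigma> x * \<sigma> y)"

definition totally_real :: "complex set \<Rightarrow> bool" where
  "totally_real K \<longleftrightarrow> (\<forall>\<sigma>. field_embedding K \<sigma> \<longrightarrow> (\<forall>x\<in>K. \<sigma> x \<in> \<real>))"

text \<open>tau enumerates all embeddings of K, each exactly once (indexed by a finite
type 'n, so n = CARD('n) = [K:Q]).\<close>

definition embedding_enumeration ::
    "complex set \<Rightarrow> ('n::finite \<Rightarrow> complex \<Rightarrow> complex) \<Rightarrow> bool" where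
  "embedding_enumeration K \<tau> \<longleftrightarrow>
     (\<forall>i. field_embedding K (\<tau> i)) \<and>
     (\<forall>i j. i \<noteq> j \<longrightarrow> (\<exists>x\<in>K. \<tau> i x \<noteq> \<tau> j x)) \<and>
     (\<forall>\<sigma>. field_embedding K \<sigma> \<longrightarrow> (\<exists>i. \<forall>x\<in>K. \<sigma> x = \<tau> i x))"

definition ring_of_integers :: "complex set \<Rightarrow> complex set" where
  "ring_of_integers K = {x \<in> K. algebraic_int x}"

definition minkowski :: "('n::finite \<Rightarrow> complex \<Rightarrow> complex) \<Rightarrow> complex \<Rightarrow> real ^ 'n" where
  "minkowski \<tau> \<alpha> = (\<chi> i. Re (\<tau> i \<alpha>))"

definition totally_positive_integers ::
    "complex set \<Rightarrow> ('n::finite \<Rightarrow> complex \<Rightarrow> complex) \<Rightarrow> complex set" where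
  "totally_positive_integers K \<tau> =
     {\<alpha> \<in> ring_of_integers K. \<forall>i. \<tau> i \<alpha> \<in> \<real> \<and> 0 < Re (\<tau> i \<alpha>)}"

definition klein_polyhedron ::
    "complex set \<Rightarrow> ('n::finite \<Rightarrow> complex \<Rightarrow> complex) \<Rightarrow> (real ^ 'n) set" where
  "klein_polyhedron K \<tau> =
     convex hull (minkowski \<tau> ` ring_of_integers K \<inter> {x. \<forall>i. 0 < x $ i})"

definition sail ::
    "complex set \<Rightarrow> ('n::finite \<Rightarrow> complex \<Rightarrow> complex) \<Rightarrow> (real ^ 'n) set" where
  "sail K \<tau> = frontier (klein_polyhedron K \<tau>)"

definition indecomposable ::
    "complex set \<Rightarrow> ('n::finite \<Rightarrow> complex \<Rightarrow> complex) \<Rightarrow> complex \<Rightarrow> bool" where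
  "indecomposable K \<tau> \<alpha> \<longleftrightarrow> \<alpha> \<in> totally_positive_integers K \<tau> \<and>
     \<not> (\<exists>\<beta>\<in>totally_positive_integers K \<tau>. \<exists>\<gamma>\<in>totally_positive_integers K \<tau>. \<alpha> = \<beta> + \<gamma>)"

end

theory Submission
  imports Defs "Jordan_Normal_Form.Char_Poly"
begin


lemma alg_int_module:
  fixes F :: "complex set" and x :: complex
  assumes fin: "finite F" and nz: "\<exists>v\<in>F. v \<noteq> 0"
  and cl: "\<forall>v\<in>F. \<exists>a::complex\<Rightarrow>int. x * v = (\<Sum>u\<in>F. of_int (a u) * u)"
  shows "algebraic_int x"
proof -
  obtain vs where vs: "distinct vs" "set vs = F" using finite_distinct_list[OF fin] by blast
  define n where "n = length vs"
  from cl obtain a where a: "\<And>v. v\<in>F \<Longrightarrow> x * v = (\<Sum>u\<in>F. of_int (a v u) * u)" by metis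
  have bij: "bij_betw ((!) vs) {..<n} F" using bij_betw_nth[OF vs(1)] vs(2) n_def by auto
  define Ai :: "int mat" where "Ai = Matrix.mat n n (\<lambda>(j,k). a (vs!j) (vs!k))"
  define A :: "complex mat" where "A = map_mat of_int Ai"
  define w :: "complex Matrix.vec" where "w = Matrix.vec n (\<lambda>k. vs!k)"
  have Ai: "Ai \<in> carrier_mat n n" unfolding Ai_def by auto
  have A: "A \<in> carrier_mat n n" unfolding A_def using Ai by auto
  have "A *\<^sub>v w = x \<cdot>\<^sub>v w"
  proof (rule eq_vecI)
    fix j assume j: "j < dim_vec (x \<cdot>\<^sub>v w)"
    hence j': "j < n" by (simp add: w_def)
    have "(A *\<^sub>v w) $ j = (\<Sum>k<n. of_int (a (vs!j) (vs!k)) * vs!k)"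
      using j' A unfolding A_def Ai_def w_def
      by (auto simp: lessThan_atLeast0 Matrix.row_def Matrix.scalar_prod_def intro!: sum.cong)
    also have "\<dots> = (\<Sum>u\<in>F. of_int (a (vs!j) u) * u)"
      using sum.reindex_bij_betw[OF bij, of "\<lambda>u. of_int (a (vs!j) u) * u"] by simp
    also have "\<dots> = x * vs!j" using a[of "vs!j"] j' vs n_def by auto
    finally show "(A *\<^sub>v w) $ j = (x \<cdot>\<^sub>v w) $ j" using j' by (simp add: w_def)
  qed (simp add: w_def A_def Ai_def)
  moreover have "w \<noteq> 0\<^sub>v n"
  proof
    assume "w = 0\<^sub>v n"
    from nz obtain v where v: "v \<in> F" "v \<noteq> 0" by blast
    then obtain k where k: "k < n" "vs!k = v" using vs n_def by (auto simp: in_set_conv_nth)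
    have "w $ k = 0" using \<open>w = 0\<^sub>v n\<close> k by simp
    thus False using k v by (simp add: w_def)
  qed
  moreover have "w \<in> carrier_vec n" by (simp add: w_def)
  ultimately have "eigenvalue A x" unfolding eigenvalue_def eigenvector_def using A
    by auto
  hence "poly (char_poly A) x = 0" using eigenvalue_root_char_poly[OF A] by simp
  moreover have "char_poly A = map_poly of_int (char_poly Ai)"
    unfolding A_def by (rule of_int_hom.char_poly_hom[OF Ai])
  moreover have "lead_coeff (char_poly Ai) = 1" using degree_monic_char_poly[OF Ai] by simp
  ultimately show ?thesis unfolding algebraic_int_altdef_ipoly by auto
qed



definition ispan :: "complex set \<Rightarrow> complex set" where
  "ispan F = {z. \<exists>a::complex\<Rightarrow>int. z = (\<Sum>u\<in>F. of_int (a u) * u)}"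

lemma ispan_0: "0 \<in> ispan F"
  unfolding ispan_def by (rule CollectI, rule exI[of _ "\<lambda>_. 0"]) simp

lemma ispan_add: assumes "z \<in> ispan F" "w \<in> ispan F" shows "z + w \<in> ispan F"
proof -
  from assms obtain a b where "z = (\<Sum>u\<in>F. of_int (a u) * u)" "w = (\<Sum>u\<in>F. of_int (b u) * u)"
    unfolding ispan_def by blast
  hence "z + w = (\<Sum>u\<in>F. of_int (a u + b u) * u)" by (simp add: sum.distrib distrib_right)
  thus ?thesis unfolding ispan_def by (intro CollectI exI[of _ "\<lambda>u. a u + b u"])
qed

lemma ispan_smult: assumes "z \<in> ispan F" shows "of_int k * z \<in> ispan F"
proof -
  from assms obtain a where "z = (\<Sum>u\<in>F. of_int (a u) * u)"
    unfolding ispan_def by blast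
  hence "of_int k * z = (\<Sum>u\<in>F. of_int (k * a u) * u)" by (simp add: sum_distrib_left mult.assoc)
  thus ?thesis unfolding ispan_def by (intro CollectI exI[of _ "\<lambda>u. k * a u"])
qed

lemma ispan_base: assumes "finite F" "v \<in> F" shows "v \<in> ispan F"
proof -
  have "(\<Sum>u\<in>F. of_int (if u = v then 1 else 0) * u) = (\<Sum>u\<in>F. if u = v then u else 0)"
    by (rule sum.cong) auto
  also have "\<dots> = v" using assms by (simp add: sum.delta)
  finally have "v = (\<Sum>u\<in>F. of_int (if u = v then 1 else 0) * u)" by simp
  thus ?thesis unfolding ispan_def by (intro CollectI exI[of _ "\<lambda>u. if u = v then 1 else 0"])
qed

lemma ispan_sum: assumes "finite I" "\<And>i. i \<in> I \<Longrightarrow> f i \<in> ispan F" shows "(\<Sum>i\<in>I. f i) \<in> ispan F"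
  using assms by (induction I rule: finite_induct) (auto intro: ispan_0 ispan_add)

lemma ispan_lin: assumes "finite F" "\<And>v. v \<in> F \<Longrightarrow> g v \<in> ispan G"
  and "z \<in> ispan F" and "\<And>a b. g (a + b) = g a + g b" "\<And>k a. g (of_int k * a) = of_int k * g a"
  shows "g z \<in> ispan G"
proof -
  from assms(3) obtain a where z: "z = (\<Sum>u\<in>F. of_int (a u) * u)" unfolding ispan_def by blast
  have g0: "g 0 = 0" using assms(5)[of 0 0] by simp
  have "g z = (\<Sum>u\<in>F. of_int (a u) * g u)" unfolding z using assms(1)
    by (induction F rule: finite_induct) (auto simp: g0 assms(4,5))
  also have "\<dots> \<in> ispan G" using assms(1,2) by (intro ispan_sum ispan_smult) auto
  finally show ?thesis .
qed

lemma alg_int_ispan: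
  assumes "finite F" "\<exists>v\<in>F. v \<noteq> 0" "\<And>v. v \<in> F \<Longrightarrow> x * v \<in> ispan F"
  shows "algebraic_int x"
  using assms by (intro alg_int_module) (auto simp: ispan_def)

lemma alg_int_powers:
  assumes "algebraic_int x"
  obtains d where "d > 0" "\<And>k. x ^ k \<in> ispan ((\<lambda>i. x ^ i) ` {..<d})"
proof -
  from assms obtain p where p: "poly (map_poly of_int p) x = 0" "lead_coeff p = 1"
    unfolding algebraic_int_altdef_ipoly by blast
  define d where "d = degree p"
  define F where "F = (\<lambda>i. x ^ i) ` {..<d}"
  have "d > 0"
  proof (rule ccontr)
    assume "\<not> d > 0"
    hence "degree p = 0" by (simp add: d_def)
    hence "p = [:1:]" using p(2) by (metis degree_0_id lead_coeff_pCons(1) pCons_0_0 zero_neq_one)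
    thus False using p(1) by simp
  qed
  have fin: "finite F" by (simp add: F_def)
  have low: "x ^ i \<in> ispan F" if "i < d" for i using that fin by (intro ispan_base) (auto simp: F_def)
  have "poly (map_poly of_int p) x = (\<Sum>i\<le>d. of_int (coeff p i) * x ^ i)"
    by (simp add: poly_altdef d_def degree_map_poly_le coeff_map_poly)
  also have "\<dots> = (\<Sum>i<d. of_int (coeff p i) * x ^ i) + x ^ d"
    using p(2) by (simp add: lessThan_Suc_atMost[symmetric] d_def)
  finally have "x ^ d = - (\<Sum>i<d. of_int (coeff p i) * x ^ i)" using p(1) by (simp add: add_eq_0_iff2)
  also have "\<dots> = (\<Sum>i<d. of_int (- coeff p i) * x ^ i)" by (simp add: sum_negf)
  also have "\<dots> \<in> ispan F" by (intro ispan_sum ispan_smult low) auto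
  finally have top: "x ^ d \<in> ispan F" .
  have "x ^ k \<in> ispan F" for k
  proof (induction k)
    case 0 thus ?case using low \<open>d > 0\<close> by (metis power_0)
  next
    case (Suc k)
    have "x * x ^ k \<in> ispan F"
    proof (rule ispan_lin[OF fin _ Suc, where g = "\<lambda>z. x * z"])
      fix v assume "v \<in> F"
      then obtain i where i: "i < d" "v = x ^ i" by (auto simp: F_def)
      show "x * v \<in> ispan F"
      proof (cases "Suc i < d")
        case True thus ?thesis using low[of "Suc i"] i by simp
      next
        case False hence "Suc i = d" using i by auto
        thus ?thesis using top i by (metis power_Suc)
      qed
    qed (auto simp: algebra_simps)
    thus ?case by simp
  qed
  thus ?thesis using that \<open>d > 0\<close> F_def by blast
qed



lemma alg_int_add_mult:
  fixes x y :: complex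
  assumes x: "algebraic_int x" and y: "algebraic_int y"
  shows "algebraic_int (x + y) \<and> algebraic_int (x * y)"
proof -
  obtain d where d: "d > 0" "\<And>k. x ^ k \<in> ispan ((\<lambda>i. x ^ i) ` {..<d})" using alg_int_powers[OF x] by blast
  obtain e where e: "e > 0" "\<And>k. y ^ k \<in> ispan ((\<lambda>i. y ^ i) ` {..<e})" using alg_int_powers[OF y] by blast
  define Fx where "Fx = (\<lambda>i. x ^ i) ` {..<d}"
  define Fy where "Fy = (\<lambda>i. y ^ i) ` {..<e}"
  define F where "F = (\<lambda>(u,v). u * v) ` (Fx \<times> Fy)"
  have finx: "finite Fx" and finy: "finite Fy" and fin: "finite F" by (auto simp: Fx_def Fy_def F_def)
  have B: "u * z \<in> ispan F" if "u \<in> Fx" "z \<in> ispan Fy" for u z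
    by (rule ispan_lin[OF finy _ that(2), where g = "\<lambda>z. u * z"])
       (use that(1) fin in \<open>auto simp: F_def algebra_simps intro!: ispan_base image_eqI[of _ _ "(u, _)"]\<close>)
  have C: "x ^ k * y ^ l \<in> ispan F" for k l
    by (rule ispan_lin[OF finx _ d(2)[of k, folded Fx_def], where g = "\<lambda>z. z * y ^ l"])
       (auto simp: algebra_simps intro!: B e(2)[of l, folded Fy_def])
  have nz: "\<exists>v\<in>F. v \<noteq> 0"
    using d e by (intro bexI[of _ 1]) (auto simp: F_def Fx_def Fy_def image_iff intro!: bexI[of _ "0::nat"])
  have Fform: "\<exists>i j. w = x ^ i * y ^ j" if "w \<in> F" for w using that by (auto simp: F_def Fx_def Fy_def)
  have "algebraic_int (x + y)"
  proof (rule alg_int_ispan[OF fin nz])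
    fix w assume "w \<in> F"
    then obtain i j where w: "w = x ^ i * y ^ j" using Fform by blast
    have "(x + y) * w = x ^ Suc i * y ^ j + x ^ i * y ^ Suc j" by (simp add: w algebra_simps)
    thus "(x + y) * w \<in> ispan F" using ispan_add[OF C[of "Suc i" j] C[of i "Suc j"]] by simp
  qed
  moreover have "algebraic_int (x * y)"
  proof (rule alg_int_ispan[OF fin nz])
    fix w assume "w \<in> F"
    then obtain i j where w: "w = x ^ i * y ^ j" using Fform by blast
    have "(x * y) * w = x ^ Suc i * y ^ Suc j" by (simp add: w algebra_simps)
    thus "(x * y) * w \<in> ispan F" using C[of "Suc i" "Suc j"] by metis
  qed
  ultimately show ?thesis ..
qed



lemma rat_denom_mult:
  fixes r :: rat and D :: int
  assumes "snd (quotient_of r) dvd D"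
  shows "\<exists>k::int. of_int D * (of_rat r :: complex) = of_int k"
proof -
  obtain p q where pq: "quotient_of r = (p, q)" by (cases "quotient_of r")
  have q: "q > 0" using quotient_of_denom_pos[OF pq] .
  have r: "r = of_int p / of_int q" using quotient_of_div[OF pq] .
  from assms pq obtain t where D: "D = q * t" by auto
  have "of_int D * (of_rat r :: complex) = of_int (t * p)"
    using q by (simp add: r D of_rat_divide field_simps)
  thus ?thesis by blast
qed

lemma nf_denom:
  assumes nf: "number_field K" and x: "x \<in> K"
  shows "\<exists>m::nat. m > 0 \<and> algebraic_int (of_nat m * x)"
proof -
  from nf obtain B where B: "finite B" "B \<subseteq> K"
    "\<And>y. y \<in> K \<Longrightarrow> \<exists>c :: complex \<Rightarrow> rat. y = (\<Sum>b\<in>B. of_rat (c b) * b)"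
    unfolding number_field_def by blast
  have sf: "subfield_of_complex K" using nf unfolding number_field_def by blast
  have mulK: "a * b \<in> K" if "a \<in> K" "b \<in> K" for a b using sf that unfolding subfield_of_complex_def by blast
  have "\<forall>b\<in>B. \<exists>c :: complex \<Rightarrow> rat. x * b = (\<Sum>b'\<in>B. of_rat (c b') * b')"
    using B mulK x by blast
  then obtain C where C: "\<And>b. b \<in> B \<Longrightarrow> x * b = (\<Sum>b'\<in>B. of_rat (C b b') * b')"
    using bchoice[of B "\<lambda>b c. x * b = (\<Sum>b'\<in>B. of_rat (c b') * b')"] by blast
  define D where "D = (\<Prod>p\<in>B \<times> B. snd (quotient_of (C (fst p) (snd p))))"
  have Dpos: "D > 0" unfolding D_def using B(1)
    by (intro prod_pos) (auto intro: quotient_of_denom_pos')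
  have "\<forall>p\<in>B \<times> B. \<exists>k::int. of_int D * (of_rat (C (fst p) (snd p)) :: complex) = of_int k"
  proof (intro ballI)
    fix p assume "p \<in> B \<times> B"
    then obtain b b' where p: "p = (b, b')" "b \<in> B" "b' \<in> B" by auto
    hence "snd (quotient_of (C b b')) dvd D" using p unfolding D_def using B(1)
      by (intro dvd_prodI[where a = "(b, b')" and f = "\<lambda>p. snd (quotient_of (C (fst p) (snd p)))", simplified]) auto
    thus "\<exists>k::int. of_int D * (of_rat (C (fst p) (snd p)) :: complex) = of_int k" unfolding p(1) by (simp add: rat_denom_mult)
  qed
  then obtain k0 where k0: "\<And>p. p \<in> B \<times> B \<Longrightarrow> of_int D * (of_rat (C (fst p) (snd p)) :: complex) = of_int (k0 p)"
    using bchoice[of "B \<times> B" "\<lambda>p k. of_int D * (of_rat (C (fst p) (snd p)) :: complex) = of_int k"] by blast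
  define k where "k = (\<lambda>b b'. k0 (b, b'))"
  have k: "\<And>b b'. b \<in> B \<Longrightarrow> b' \<in> B \<Longrightarrow> of_int D * (of_rat (C b b') :: complex) = of_int (k b b')"
    using k0 unfolding k_def by force
  have "1 \<in> K" using sf unfolding subfield_of_complex_def by blast
  then obtain c1 where c1: "1 = (\<Sum>b\<in>B. of_rat (c1 b) * b)" using B(3) by blast
  have nz: "\<exists>v\<in>B. v \<noteq> 0"
  proof (rule ccontr)
    assume "\<not> ?thesis"
    hence "(\<Sum>b\<in>B. of_rat (c1 b) * b) = 0" by (intro sum.neutral) auto
    thus False using c1 by simp
  qed
  have "algebraic_int (of_int D * x)"
  proof (rule alg_int_ispan[OF B(1) nz])
    fix v assume v: "v \<in> B"
    have "of_int D * x * v = (\<Sum>b'\<in>B. of_int D * of_rat (C v b') * b')"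
      unfolding mult.assoc C[OF v] sum_distrib_left ..
    also have "\<dots> = (\<Sum>b'\<in>B. of_int (k v b') * b')"
      using k v by (intro sum.cong) auto
    finally show "of_int D * x * v \<in> ispan B" unfolding ispan_def by (intro CollectI exI[of _ "k v"])
  qed
  hence "algebraic_int (of_nat (nat D) * x)" using Dpos by (simp add: of_nat_nat)
  moreover have "nat D > 0" using Dpos by simp
  ultimately show ?thesis by blast
qed



lemma artin:
  fixes \<tau> :: "'n \<Rightarrow> complex \<Rightarrow> complex" and K :: "complex set"
  assumes mult: "\<And>i x y. x \<in> K \<Longrightarrow> y \<in> K \<Longrightarrow> \<tau> i (x*y) = \<tau> i x * \<tau> i y"
  and one: "\<And>i. \<tau> i 1 = 1" and K1: "1 \<in> K" and Kmul: "\<And>x y. x\<in>K \<Longrightarrow> y\<in>K \<Longrightarrow> x*y \<in> K"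
  and dist: "\<And>i j. i \<noteq> j \<Longrightarrow> \<exists>x\<in>K. \<tau> i x \<noteq> \<tau> j x"
  shows "finite S \<Longrightarrow> \<forall>c. (\<forall>x\<in>K. (\<Sum>k\<in>S. c k * \<tau> k x) = 0) \<longrightarrow> (\<forall>k\<in>S. c k = 0)"
proof (induction S rule: finite_psubset_induct)
  case (psubset S)
  show ?case
  proof (intro allI impI ballI, rule ccontr)
    fix c k0 assume van: "\<forall>x\<in>K. (\<Sum>k\<in>S. c k * \<tau> k x) = 0" and k0: "k0 \<in> S" and ck0: "c k0 \<noteq> 0"
    define T where "T = {k\<in>S. c k \<noteq> 0}"
    have TS: "T \<subseteq> S" by (auto simp: T_def)
    have sumT: "(\<Sum>k\<in>T. c k * \<tau> k x) = (\<Sum>k\<in>S. c k * \<tau> k x)" for x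
      using psubset.hyps TS by (intro sum.mono_neutral_left) (auto simp: T_def)
    have "T = S"
    proof (rule ccontr)
      assume "T \<noteq> S"
      hence "T \<subset> S" using TS by auto
      from psubset.IH[OF this, rule_format, of c k0] van sumT k0 ck0 show False by (auto simp: T_def)
    qed
    hence allnz: "\<And>k. k \<in> S \<Longrightarrow> c k \<noteq> 0" by (auto simp: T_def)
    show False
    proof (cases "S = {k0}")
      case True
      thus False using van K1 one ck0 by auto
    next
      case False
      then obtain j where j: "j \<in> S" "j \<noteq> k0" using k0 by auto
      then obtain y where y: "y \<in> K" "\<tau> j y \<noteq> \<tau> k0 y" using dist[of j k0] by auto
      define d where "d k = c k * (\<tau> k y - \<tau> k0 y)" for k
      have "(\<Sum>k\<in>S - {k0}. d k * \<tau> k x) = 0" if x: "x \<in> K" for x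
      proof -
        have "(\<Sum>k\<in>S - {k0}. d k * \<tau> k x) = (\<Sum>k\<in>S. d k * \<tau> k x)"
          using psubset.hyps k0 by (intro sum.mono_neutral_left) (auto simp: d_def)
        also have "\<dots> = (\<Sum>k\<in>S. c k * \<tau> k (y * x)) - \<tau> k0 y * (\<Sum>k\<in>S. c k * \<tau> k x)"
          using x y by (simp add: d_def mult sum_distrib_left sum_subtractf algebra_simps)
        also have "\<dots> = 0" using van x y Kmul by simp
        finally show ?thesis .
      qed
      hence "\<forall>k\<in>S - {k0}. d k = 0" using psubset.IH[of "S - {k0}"] k0 by blast
      hence "d j = 0" using j by auto
      thus False using allnz[OF j(1)] y by (simp add: d_def)
    qed
  qed
qed



theorem theorem2p4:
  fixes K :: "complex set" and \<tau> :: "'n::finite \<Rightarrow> complex \<Rightarrow> complex" and \<alpha> :: complex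
  assumes "number_field K"
    and "totally_real K"
    and "embedding_enumeration K \<tau>"
    and "\<alpha> \<in> totally_positive_integers K \<tau>"
    and "minkowski \<tau> \<alpha> \<in> sail K \<tau>"
  shows "indecomposable K \<tau> \<alpha>"
proof -
  note nf = assms(1)
  have sf: "subfield_of_complex K" using nf unfolding number_field_def by blast
  have Kadd: "x + y \<in> K" and Kmul: "x * y \<in> K" if "x \<in> K" "y \<in> K" for x y
    using sf that unfolding subfield_of_complex_def by blast+
  have Kneg: "- x \<in> K" if "x \<in> K" for x using sf that unfolding subfield_of_complex_def by blast
  have K1: "1 \<in> K" and K0: "0 \<in> K" using sf unfolding subfield_of_complex_def by blast+
  have emb: "field_embedding K (\<tau> i)" for i using assms(3) unfolding embedding_enumeration_def by blast
  have tadd: "\<tau> i (x + y) = \<tau> i x + \<tau> i y" and tmul: "\<tau> i (x * y) = \<tau> i x * \<tau> i y"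
    if "x \<in> K" "y \<in> K" for i x y using emb[of i] that unfolding field_embedding_def by blast+
  have t1: "\<tau> i 1 = 1" for i using emb[of i] unfolding field_embedding_def by blast
  have t0: "\<tau> i 0 = 0" for i using tadd[OF K0 K0, of i] by simp
  have tneg: "\<tau> i (- x) = - \<tau> i x" if "x \<in> K" for i x
    using tadd[OF that Kneg[OF that], of i] t0[of i] by (simp add: eq_neg_iff_add_eq_0 add.commute)
  have Knat: "of_nat m \<in> K" for m
    by (induction m) (auto simp: K0 K1 Kadd)
  have tnat: "\<tau> i (of_nat m) = of_nat m" for i m
  proof (induction m)
    case (Suc m)
    have "\<tau> i (of_nat (Suc m)) = \<tau> i (1 + of_nat m)" by simp
    also have "\<dots> = 1 + of_nat m" using tadd[OF K1 Knat, of i m] t1 Suc by simp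
    finally show ?case by simp
  qed (simp add: t0)
  have treal: "\<tau> i x \<in> \<real>" if "x \<in> K" for i x
    using assms(2) emb[of i] that unfolding totally_real_def by blast
  have tRe: "of_real (Re (\<tau> i x)) = \<tau> i x" if "x \<in> K" for i x
    using treal[OF that] by (simp add: of_real_Re)
  define \<iota> where "\<iota> = minkowski \<tau>"
  define OK where "OK = ring_of_integers K"
  have iadd: "\<iota> (x + y) = \<iota> x + \<iota> y" if "x \<in> K" "y \<in> K" for x y
    using that by (simp add: \<iota>_def minkowski_def Finite_Cartesian_Product.vec_eq_iff tadd)
  have ineg: "\<iota> (- x) = - \<iota> x" if "x \<in> K" for x
    using that by (simp add: \<iota>_def minkowski_def Finite_Cartesian_Product.vec_eq_iff tneg)
  have inat: "\<iota> (of_nat m * x) = real m *\<^sub>R \<iota> x" if "x \<in> K" for m x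
    using that by (simp add: \<iota>_def minkowski_def Finite_Cartesian_Product.vec_eq_iff tmul[OF Knat] tnat)
  have ii: "\<iota> x $ i = Re (\<tau> i x)" for x i by (simp add: \<iota>_def minkowski_def)
  have OKK: "x \<in> K" and OKi: "algebraic_int x" if "x \<in> OK" for x
    using that by (auto simp: OK_def ring_of_integers_def)
  have spanOK: "span (\<iota> ` OK) = UNIV"
  proof (rule ccontr)
    assume "span (\<iota> ` OK) \<noteq> UNIV"
    hence "span (\<iota> ` OK) \<subset> span UNIV" by auto
    then obtain w :: "real ^ 'n" where w: "w \<noteq> 0" "\<And>y. y \<in> span (\<iota> ` OK) \<Longrightarrow> real_inner_class.orthogonal w y"
      using orthogonal_to_subspace_exists_gen[of "\<iota> ` OK" UNIV] by blast
    have vanOK: "(\<Sum>i\<in>UNIV. complex_of_real (w $ i) * \<tau> i y) = 0" if y: "y \<in> OK" for y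
    proof -
      have "w \<bullet> \<iota> y = 0" using w(2)[of "\<iota> y"] y by (auto simp: real_inner_class.orthogonal_def span_base)
      hence "(\<Sum>i\<in>UNIV. w $ i * Re (\<tau> i y)) = 0" by (simp add: inner_vec_def ii)
      hence "complex_of_real (\<Sum>i\<in>UNIV. w $ i * Re (\<tau> i y)) = 0" by simp
      thus ?thesis using tRe[OF OKK[OF y]] by simp
    qed
    have vanK: "(\<Sum>i\<in>UNIV. complex_of_real (w $ i) * \<tau> i x) = 0" if x: "x \<in> K" for x
    proof -
      obtain m :: nat where m: "m > 0" "algebraic_int (of_nat m * x)" using nf_denom[OF nf x] by blast
      have "of_nat m * x \<in> OK" using m Kmul[OF Knat x] by (simp add: OK_def ring_of_integers_def)
      hence "(\<Sum>i\<in>UNIV. complex_of_real (w $ i) * \<tau> i (of_nat m * x)) = 0" by (rule vanOK)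
      hence "of_nat m * (\<Sum>i\<in>UNIV. complex_of_real (w $ i) * \<tau> i x) = 0"
        unfolding tmul[OF Knat x] tnat sum_distrib_left by (simp add: algebra_simps)
      thus ?thesis using m by simp
    qed
    have dist: "\<exists>x\<in>K. \<tau> i x \<noteq> \<tau> j x" if "i \<noteq> j" for i j
      using assms(3) that unfolding embedding_enumeration_def by blast
    have A: "\<forall>c. (\<forall>x\<in>K. (\<Sum>k\<in>UNIV. c k * \<tau> k x) = 0) \<longrightarrow> (\<forall>k\<in>UNIV. c k = 0)"
      by (rule artin[of K \<tau> UNIV, OF tmul t1 K1 Kmul dist]) auto
    have "\<forall>k\<in>UNIV. complex_of_real (w $ k) = 0"
      using A[rule_format, of "\<lambda>k. complex_of_real (w $ k)"] vanK by blast
    hence "w = 0" by (simp add: Finite_Cartesian_Product.vec_eq_iff)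
    thus False using w by simp
  qed
  define TP where "TP = totally_positive_integers K \<tau>"
  have TPd: "z \<in> OK" "\<tau> i z \<in> \<real>" "0 < Re (\<tau> i z)" if "z \<in> TP" for z i
    using that unfolding TP_def totally_positive_integers_def OK_def by blast+
  define P where "P = \<iota> ` OK \<inter> {x. \<forall>i. 0 < x $ i}"
  define H where "H = convex hull P"
  have Hdef: "klein_polyhedron K \<tau> = H" by (simp add: klein_polyhedron_def H_def P_def \<iota>_def OK_def)
  have inP: "\<iota> z \<in> P" if "z \<in> TP" for z using TPd[OF that] by (auto simp: P_def ii)
  have inH: "\<iota> z \<in> H" if "z \<in> TP" for z using inP[OF that] unfolding H_def by (rule hull_inc)
  have cH: "convex H" unfolding H_def by simp
  have \<alpha>TP: "\<alpha> \<in> TP" using assms(4) by (simp add: TP_def)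
  show ?thesis unfolding indecomposable_def
  proof (intro conjI notI)
    show "\<alpha> \<in> totally_positive_integers K \<tau>" by (rule assms(4))
  next
    assume "\<exists>\<beta>\<in>totally_positive_integers K \<tau>. \<exists>\<gamma>\<in>totally_positive_integers K \<tau>. \<alpha> = \<beta> + \<gamma>"
    then obtain \<beta> \<gamma> where \<beta>: "\<beta> \<in> TP" and \<gamma>: "\<gamma> \<in> TP" and \<alpha>: "\<alpha> = \<beta> + \<gamma>"
      unfolding TP_def by blast
    have \<beta>K: "\<beta> \<in> K" and \<gamma>K: "\<gamma> \<in> K" using TPd(1)[OF \<beta>] TPd(1)[OF \<gamma>] OKK by auto
    define E where "E = {v. \<iota> \<alpha> + v \<in> H \<and> \<iota> \<alpha> - v \<in> H}"
    have one_side: "\<iota> \<alpha> + (1 / real N) *\<^sub>R \<iota> s \<in> H"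
      if s: "s \<in> OK" and N: "N > 0" and big: "\<And>i. \<bar>Re (\<tau> i s)\<bar> < real N * Re (\<tau> i \<gamma>)" for s N
    proof -
      define z where "z = \<beta> + of_nat N * \<gamma> + s"
      have sK: "s \<in> K" using OKK[OF s] .
      have zK: "z \<in> K" unfolding z_def using \<beta>K \<gamma>K sK by (intro Kadd Kmul Knat) auto
      have "algebraic_int (of_nat N * \<gamma>)"
        using alg_int_add_mult[of "of_nat N" \<gamma>] OKi[OF TPd(1)[OF \<gamma>]] by auto
      hence "algebraic_int z" unfolding z_def
        using alg_int_add_mult OKi[OF TPd(1)[OF \<beta>]] OKi[OF s] by blast
      hence zOK: "z \<in> OK" using zK by (simp add: OK_def ring_of_integers_def)
      have tz: "\<tau> i z = \<tau> i \<beta> + of_nat N * \<tau> i \<gamma> + \<tau> i s" for i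
        unfolding z_def using \<beta>K \<gamma>K sK Knat
        by (simp add: tadd Kadd Kmul tmul tnat)
      have "0 < Re (\<tau> i z)" for i
      proof -
        have "0 < Re (\<tau> i \<beta>)" using TPd(3)[OF \<beta>] .
        moreover have "- Re (\<tau> i s) < real N * Re (\<tau> i \<gamma>)" using big[of i] by linarith
        ultimately show ?thesis by (simp add: tz)
      qed
      hence zTP: "z \<in> TP" using zOK zK treal by (simp add: TP_def totally_positive_integers_def OK_def)
      have iz: "\<iota> z = \<iota> \<beta> + real N *\<^sub>R \<iota> \<gamma> + \<iota> s"
        unfolding z_def using \<beta>K \<gamma>K sK Knat by (simp add: iadd Kadd Kmul inat)
      have "(1 - 1 / real N) *\<^sub>R \<iota> \<beta> + (1 / real N) *\<^sub>R \<iota> z \<in> H"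
        using N by (intro convexD[OF cH inH[OF \<beta>] inH[OF zTP]]) auto
      also have "(1 - 1 / real N) *\<^sub>R \<iota> \<beta> + (1 / real N) *\<^sub>R \<iota> z = \<iota> \<alpha> + (1 / real N) *\<^sub>R \<iota> s"
        using N by (simp add: iz \<alpha> iadd[OF \<beta>K \<gamma>K] algebra_simps)
      finally show ?thesis .
    qed
    have inE: "\<exists>N::nat. N > 0 \<and> (1 / real N) *\<^sub>R \<iota> \<delta> \<in> E" if \<delta>: "\<delta> \<in> OK" for \<delta>
    proof -
      define S where "S = (\<Sum>i\<in>UNIV. \<bar>Re (\<tau> i \<delta>)\<bar> / Re (\<tau> i \<gamma>))"
      define N where "N = nat \<lceil>S\<rceil> + 1"
      have big: "\<bar>Re (\<tau> i \<delta>)\<bar> < real N * Re (\<tau> i \<gamma>)" for i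
      proof -
        have g: "0 < Re (\<tau> i \<gamma>)" using TPd(3)[OF \<gamma>] .
        have "\<bar>Re (\<tau> i \<delta>)\<bar> / Re (\<tau> i \<gamma>) \<le> S" unfolding S_def
          by (rule member_le_sum) (use TPd(3)[OF \<gamma>] in \<open>auto intro!: divide_nonneg_pos\<close>)
        also have "S < real N" unfolding N_def by linarith
        finally show ?thesis using g by (simp add: divide_less_eq)
      qed
      have N: "N > 0" by (simp add: N_def)
      have mOK: "- \<delta> \<in> OK" using \<delta> Kneg by (auto simp: OK_def ring_of_integers_def)
      have "\<iota> \<alpha> + (1 / real N) *\<^sub>R \<iota> \<delta> \<in> H" using one_side[OF \<delta> N big] .
      moreover have "\<bar>Re (\<tau> i (- \<delta>))\<bar> < real N * Re (\<tau> i \<gamma>)" for i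
        using big[of i] unfolding tneg[OF OKK[OF \<delta>]] by simp
      hence "\<iota> \<alpha> + (1 / real N) *\<^sub>R \<iota> (- \<delta>) \<in> H" by (rule one_side[OF mOK N])
      hence "\<iota> \<alpha> - (1 / real N) *\<^sub>R \<iota> \<delta> \<in> H" unfolding ineg[OF OKK[OF \<delta>]] by simp
      ultimately show ?thesis using N by (auto simp: E_def)
    qed
    have spanE: "span E = UNIV"
    proof -
      have "\<iota> ` OK \<subseteq> span E"
      proof
        fix y assume "y \<in> \<iota> ` OK"
        then obtain \<delta> where \<delta>: "\<delta> \<in> OK" "y = \<iota> \<delta>" by auto
        obtain N :: nat where N: "N > 0" "(1 / real N) *\<^sub>R \<iota> \<delta> \<in> E" using inE[OF \<delta>(1)] by blast
        have "real N *\<^sub>R ((1 / real N) *\<^sub>R \<iota> \<delta>) \<in> span E" by (intro span_mul span_base N)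
        thus "y \<in> span E" using N \<delta> by simp
      qed
      hence "span (\<iota> ` OK) \<subseteq> span E" by (rule span_minimal) simp
      thus ?thesis using spanOK by auto
    qed
    have E0: "0 \<in> E" using inH[OF \<alpha>TP] by (simp add: E_def)
    have Esym: "- v \<in> E" if "v \<in> E" for v using that by (simp add: E_def)
    have cE: "convex E"
      unfolding convex_def
    proof (intro ballI allI impI)
      fix x y :: "real ^ 'n" and u v :: real
      assume xy: "x \<in> E" "y \<in> E" and uv: "0 \<le> u" "0 \<le> v" "u + v = 1"
      have "u *\<^sub>R (\<iota> \<alpha> + x) + v *\<^sub>R (\<iota> \<alpha> + y) \<in> H"
        using xy uv by (intro convexD[OF cH]) (auto simp: E_def)
      moreover have "u *\<^sub>R (\<iota> \<alpha> - x) + v *\<^sub>R (\<iota> \<alpha> - y) \<in> H"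
        using xy uv by (intro convexD[OF cH]) (auto simp: E_def)
      moreover have "u *\<^sub>R (\<iota> \<alpha> + x) + v *\<^sub>R (\<iota> \<alpha> + y) = \<iota> \<alpha> + (u *\<^sub>R x + v *\<^sub>R y)"
        "u *\<^sub>R (\<iota> \<alpha> - x) + v *\<^sub>R (\<iota> \<alpha> - y) = \<iota> \<alpha> - (u *\<^sub>R x + v *\<^sub>R y)"
        using uv by (simp_all add: algebra_simps scaleR_add_left[symmetric])
      ultimately show "u *\<^sub>R x + v *\<^sub>R y \<in> E" by (simp add: E_def)
    qed
    have "affine hull E = UNIV"
      using affine_hull_span_0[of E] E0 spanE hull_inc[of 0 E] by auto
    hence "rel_interior E = interior E" by (rule rel_interior_interior)
    moreover have "rel_interior E \<noteq> {}" using rel_interior_eq_empty[OF cE] E0 by auto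
    ultimately obtain p where "p \<in> interior E" by auto
    then obtain r where r: "r > 0" "ball p r \<subseteq> E" by (auto simp: mem_interior)
    have "ball 0 r \<subseteq> E"
    proof
      fix z :: "real ^ 'n" assume z: "z \<in> ball 0 r"
      have "p + z \<in> E" using z r(2) by (auto simp: dist_norm subset_iff)
      moreover have "p - z \<in> E" using z r(2) by (auto simp: dist_norm subset_iff)
      hence "z - p \<in> E" using Esym[of "p - z"] by simp
      ultimately have "(1/2) *\<^sub>R (p + z) + (1/2) *\<^sub>R (z - p) \<in> E"
        by (intro convexD[OF cE]) auto
      thus "z \<in> E" by (simp add: algebra_simps scaleR_add_left[symmetric])
    qed
    hence "ball (\<iota> \<alpha>) r \<subseteq> H"
    proof (intro subsetI)
      fix y assume "ball 0 r \<subseteq> E" "y \<in> ball (\<iota> \<alpha>) r"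
      hence "y - \<iota> \<alpha> \<in> E" by (auto simp: dist_norm subset_iff norm_minus_commute)
      thus "y \<in> H" by (simp add: E_def)
    qed
    hence "\<iota> \<alpha> \<in> interior H" using r(1) by (auto simp: mem_interior)
    moreover have "\<iota> \<alpha> \<in> frontier H" using assms(5) by (simp add: sail_def Hdef \<iota>_def)
    ultimately show False by (simp add: frontier_def)
  qed
qed

end
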